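(* Let $S=\{\rho_1=0<\rho_2<\cdots\}$ be an Arf numerical semigroup with conductor $c=\rho_r$. Let $d$ be an odd integer with $1\le d\le 2r-3$, write $d=2t+1$, and put $p_t=c+\rho_{t+1}-1$. Then $$\{\rho\in[0,p_t]\cap S:\ \beta(\rho)\ge t+1\}=\{\rho_{t+1}+\rho_{t+1},\ \rho_{t+1}+\rho_{t+2},\ \dots,\ \rho_{t+1}+\rho_{r-1}\}.$$
   Context: A numerical semigroup is a submonoid $S$ of $(\mathbb{N}_0,+)$ with finite complement, with elements listed increasingly. $S$ is Arf if $\rho_i+\rho_j-\rho_k\in S$ for all positive integers $i\ge j\ge k$. The conductor $c$ is the smallest integer such that all integers $\ge c$ lie in $S$, with $c=\rho_r$. For $\rho\in S$: $A[\rho]=\{p\in S:\ \rho-p\in S\}$ and $\beta(\rho)=\max\{j\ge1:\ \rho_1,\dots,\rho_j\in A[\rho]\ \text{and}\ 2\rho_j\le\rho\}$. *)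

theory Defs
  imports Main "HOL-Library.Infinite_Set"
begin

definition numerical_semigroup :: "nat set \<Rightarrow> bool" where
  "numerical_semigroup S \<longleftrightarrow> 0 \<in> S \<and> (\<forall>a\<in>S. \<forall>b\<in>S. a + b \<in> S) \<and> finite (UNIV - S)"

text \<open>rho S i is the i-th element of S listed increasingly, 1-indexed (rho S 1 = 0).\<close>
definition rho :: "nat set \<Rightarrow> nat \<Rightarrow> nat" where
  "rho S i = enumerate S (i - 1)"

definition Arf :: "nat set \<Rightarrow> bool" where
  "Arf S \<longleftrightarrow> (\<forall>i j k. 1 \<le> k \<and> k \<le> j \<and> j \<le> i \<longrightarrow>
      int (rho S i) + int (rho S j) - int (rho S k) \<in> int ` S)"

definition conductor :: "nat set \<Rightarrow> nat" where
  "conductor S = (LEAST c. \<forall>n\<ge>c. n \<in> S)"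

text \<open>A[rho] = {p in S. rho - p in S} (integer difference, so p \<le> rho).\<close>
definition Aset :: "nat set \<Rightarrow> nat \<Rightarrow> nat set" where
  "Aset S x = {p \<in> S. p \<le> x \<and> x - p \<in> S}"

definition beta :: "nat set \<Rightarrow> nat \<Rightarrow> nat" where
  "beta S x = Max {j. 1 \<le> j \<and> (\<forall>i\<in>{1..j}. rho S i \<in> Aset S x) \<and> 2 * rho S j \<le> x}"

end

theory Submission
  imports Defs
begin

lemma ns_inf: "numerical_semigroup S \<Longrightarrow> infinite S"
proof
  assume a: "numerical_semigroup S" "finite S"
  then have "finite (S \<union> (UNIV - S))" unfolding numerical_semigroup_def by auto
  then show False by simp
qed

lemma rho_less: "infinite S \<Longrightarrow> 1 \<le> i \<Longrightarrow> i < j \<Longrightarrow> rho S i < rho S j"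
  unfolding rho_def using strict_mono_enumerate[of S]
  by (simp add: strict_mono_def)

lemma rho_le: "infinite S \<Longrightarrow> 1 \<le> i \<Longrightarrow> i \<le> j \<Longrightarrow> rho S i \<le> rho S j"
  using rho_less[of S i j] by (cases "i = j") auto

lemma rho_in: "infinite S \<Longrightarrow> rho S i \<in> S"
  unfolding rho_def by (simp add: enumerate_in_set)

lemma rho_ge: "infinite S \<Longrightarrow> i - 1 \<le> rho S i"
  unfolding rho_def by (simp add: le_enumerate)

lemma S_rho: "infinite S \<Longrightarrow> y \<in> S \<Longrightarrow> \<exists>k\<ge>1. rho S k = y"
proof -
  assume "infinite S" "y \<in> S"
  then obtain n where "y = enumerate S n" using range_enumerate[of S] by blast
  then show ?thesis unfolding rho_def by (intro exI[of _ "n+1"]) auto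
qed

lemma beta_iff:
  assumes inf: "infinite S" and x: "x \<in> S" and z: "0 \<in> S"
  shows "t + 1 \<le> beta S x \<longleftrightarrow>
     ((\<forall>i\<in>{1..t+1}. rho S i \<in> Aset S x) \<and> 2 * rho S (t+1) \<le> x)"
proof -
  define B where "B = {j. 1 \<le> j \<and> (\<forall>i\<in>{1..j}. rho S i \<in> Aset S x) \<and> 2 * rho S j \<le> x}"
  have fin: "finite B"
  proof (rule finite_subset)
    show "B \<subseteq> {..x+1}"
    proof
      fix j assume "j \<in> B"
      then have "2 * rho S j \<le> x" unfolding B_def by auto
      with rho_ge[OF inf, of j] show "j \<in> {..x+1}" by auto
    qed
  qed auto
  have "rho S 1 = 0" using z by (simp add: rho_def enumerate_0 Least_eq_0)
  then have "1 \<in> B" unfolding B_def Aset_def using x z by auto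
  then have ne: "B \<noteq> {}" by auto
  have bB: "beta S x = Max B" unfolding beta_def B_def by simp
  show ?thesis
  proof
    assume "t + 1 \<le> beta S x"
    then obtain j where j: "j \<in> B" "t + 1 \<le> j" using Max_in[OF fin ne] bB by auto
    from j(1) have jB: "\<forall>i\<in>{1..j}. rho S i \<in> Aset S x" "2 * rho S j \<le> x"
      unfolding B_def by auto
    have "2 * rho S (t+1) \<le> x"
      using rho_le[OF inf, of "t+1" j] j(2) jB(2) by linarith
    moreover have "\<forall>i\<in>{1..t+1}. rho S i \<in> Aset S x" using jB(1) j(2) by auto
    ultimately show "(\<forall>i\<in>{1..t+1}. rho S i \<in> Aset S x) \<and> 2 * rho S (t+1) \<le> x" by auto
  next
    assume "(\<forall>i\<in>{1..t+1}. rho S i \<in> Aset S x) \<and> 2 * rho S (t+1) \<le> x"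
    then have "t + 1 \<in> B" unfolding B_def by auto
    then show "t + 1 \<le> beta S x" using bB Max_ge[OF fin] by auto
  qed
qed

theorem mainTheorem14:
  fixes S :: "nat set" and r d t :: nat
  assumes "numerical_semigroup S" and "Arf S"
    and "1 \<le> r" and "rho S r = conductor S"
    and "odd d" and "1 \<le> d" and "int d \<le> 2 * int r - 3"
    and "d = 2 * t + 1"
  shows "{x \<in> {0 .. conductor S + rho S (t + 1) - 1} \<inter> S. t + 1 \<le> beta S x}
         = {rho S (t + 1) + rho S k | k. t + 1 \<le> k \<and> k \<le> r - 1}"
proof -
  have inf: "infinite S" using ns_inf assms(1) .
  have z0: "0 \<in> S" using assms(1) unfolding numerical_semigroup_def by auto
  have tr: "t + 1 < r" using assms(7,8) by linarith
  have add: "a \<in> S \<Longrightarrow> b \<in> S \<Longrightarrow> a + b \<in> S" for a b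
    using assms(1) unfolding numerical_semigroup_def by auto
  show ?thesis
  proof (rule set_eqI, rule iffI)
    fix x assume "x \<in> {x \<in> {0 .. conductor S + rho S (t + 1) - 1} \<inter> S. t + 1 \<le> beta S x}"
    then have x: "x \<in> S" "x \<le> rho S r + rho S (t+1) - 1" "t + 1 \<le> beta S x"
      using assms(4) by auto
    then have "rho S (t+1) \<in> Aset S x" "2 * rho S (t+1) \<le> x"
      using beta_iff[OF inf x(1) z0, of t] by auto
    then have y: "x - rho S (t+1) \<in> S" "rho S (t+1) \<le> x" "rho S (t+1) \<le> x - rho S (t+1)"
      unfolding Aset_def by auto
    obtain k where k: "k \<ge> 1" "rho S k = x - rho S (t+1)" using S_rho[OF inf y(1)] by auto
    have "rho S 1 < rho S r" using rho_less[OF inf, of 1 r] tr by auto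
    then have "rho S k < rho S r" using x(2) y k by linarith
    then have kr: "k < r" using rho_le[OF inf, of r k] assms(3) by (cases "k < r") auto
    have kt: "t + 1 \<le> k"
    proof (rule ccontr)
      assume "\<not> t + 1 \<le> k"
      then have "rho S k < rho S (t+1)" using rho_less[OF inf k(1)] by auto
      with y k show False by linarith
    qed
    have "x = rho S (t+1) + rho S k" using k y by auto
    then show "x \<in> {rho S (t + 1) + rho S k | k. t + 1 \<le> k \<and> k \<le> r - 1}"
      using kr kt by auto
  next
    fix x assume "x \<in> {rho S (t + 1) + rho S k | k. t + 1 \<le> k \<and> k \<le> r - 1}"
    then obtain k where k: "t + 1 \<le> k" "k \<le> r - 1" "x = rho S (t + 1) + rho S k" by auto
    have xS: "x \<in> S" unfolding k(3) by (rule add[OF rho_in[OF inf] rho_in[OF inf]])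
    have "rho S k < rho S r" using rho_less[OF inf, of k r] k tr by auto
    then have xb: "x \<le> conductor S + rho S (t + 1) - 1" using k assms(4) by auto
    have le: "rho S (t+1) \<le> rho S k" using rho_le[OF inf, of "t+1" k] k by auto
    have A: "\<forall>i\<in>{1..t+1}. rho S i \<in> Aset S x"
    proof
      fix i assume i: "i \<in> {1..t+1}"
      have ar: "\<forall>i j k. 1 \<le> k \<and> k \<le> j \<and> j \<le> i \<longrightarrow>
      int (rho S i) + int (rho S j) - int (rho S k) \<in> int ` S" using assms(2) unfolding Arf_def by blast
      have "1 \<le> i \<and> i \<le> t+1 \<and> t+1 \<le> k" using i k by auto
      then have "int (rho S k) + int (rho S (t+1)) - int (rho S i) \<in> int ` S"
        using ar by blast
      then obtain z where z: "z \<in> S" "int z = int (rho S k) + int (rho S (t+1)) - int (rho S i)"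
        by auto
      have "rho S i \<le> rho S (t+1)" using rho_le[OF inf, of i "t+1"] i by auto
      then have "x - rho S i = z" using z k by linarith
      moreover have "rho S i \<le> x" using \<open>rho S i \<le> rho S (t+1)\<close> k by auto
      ultimately show "rho S i \<in> Aset S x" unfolding Aset_def using z rho_in[OF inf] by auto
    qed
    have "t + 1 \<le> beta S x" using beta_iff[OF inf xS z0, of t] A le k by auto
    then show "x \<in> {x \<in> {0 .. conductor S + rho S (t + 1) - 1} \<inter> S. t + 1 \<le> beta S x}"
      using xS xb by auto
  qed
qed

end
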